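(* Let $k>\ell\ge1$, $m\ge1$, $w=a^kba^\ell b^m$, and for $n\ge1$ let $S_n = a^kba^\ell a^{k}b a^{\ell}b^{m} (a^k b^{m+1}a^\ell)^n a^{k}b a^{\ell}b^{m} b^m$. For all integers $i,j\ge1$, $S_i\vdash^*_{\{w\}} S_j$ if and only if $i=j$.
   Context: For words $u,v$, the shuffle $u \sqcup\!\sqcup v$ is the set of all words $u_1v_1\cdots u_kv_k$ with $k\ge 1$, $u=u_1\cdots u_k$, $v=v_1\cdots v_k$ (pieces possibly empty). For a finite set $I$ of words, $v \vdash_I w$ means $w \in v \sqcup\!\sqcup u$ for some $u\in I$, and $\vdash_I^*$ is its reflexive-transitive closure. *)

theory Defs
  imports Main
begin

datatype letter = a | b

definition derives1 :: "'x list set \<Rightarrow> 'x list \<Rightarrow> 'x list \<Rightarrow> bool" where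
  "derives1 I v w \<longleftrightarrow> (\<exists>u\<in>I. w \<in> shuffles v u)"

definition derives :: "'x list set \<Rightarrow> 'x list \<Rightarrow> 'x list \<Rightarrow> bool" where
  "derives I = (derives1 I)\<^sup>*\<^sup>*"

definition wpow :: "'x list \<Rightarrow> nat \<Rightarrow> 'x list" where
  "wpow x n = concat (replicate n x)"

definition S :: "nat \<Rightarrow> nat \<Rightarrow> nat \<Rightarrow> nat \<Rightarrow> letter list" where
  "S k l m n =
     replicate k a @ [b] @ replicate l a @ replicate k a @ [b] @ replicate l a @ replicate m b
     @ wpow (replicate k a @ replicate (m+1) b @ replicate l a) n
     @ replicate k a @ [b] @ replicate l a @ replicate m b @ replicate m b"

end

theory Submission
  imports Defs
begin


inductive msh :: "nat \<Rightarrow> 'x list \<Rightarrow> (nat \<Rightarrow> 'x list) \<Rightarrow> bool" for L where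
  mnil: "(\<And>i. i < L \<Longrightarrow> ws i = []) \<Longrightarrow> msh L [] ws"
| mcons: "i < L \<Longrightarrow> ws i = c # r \<Longrightarrow> msh L u (ws(i := r)) \<Longrightarrow> msh L (c # u) ws"

lemma sum_upd:
  fixes f :: "'x list \<Rightarrow> int" and L :: nat
  assumes "i < L"
  shows "(\<Sum>r<L. f ((ws(i:=x)) r)) = (\<Sum>r<L. f (ws r)) - f (ws i) + f x"
proof -
  have "(\<Sum>r<L. f ((ws(i:=x)) r)) = f x + (\<Sum>r\<in>{..<L}-{i}. f ((ws(i:=x)) r))"
    using assms sum.remove[OF finite_lessThan[of L], of i "\<lambda>r. f ((ws(i:=x)) r)"] by simp
  also have "(\<Sum>r\<in>{..<L}-{i}. f ((ws(i:=x)) r)) = (\<Sum>r\<in>{..<L}-{i}. f (ws r))"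
    by (rule sum.cong) auto
  moreover have "(\<Sum>r<L. f (ws r)) = f (ws i) + (\<Sum>r\<in>{..<L}-{i}. f (ws r))"
    using assms sum.remove[OF finite_lessThan[of L], of i "\<lambda>r. f (ws r)"] by simp
  ultimately show ?thesis by simp
qed

lemma msh_sum:
  fixes f :: "'x \<Rightarrow> int"
  shows "msh L u ws \<Longrightarrow> sum_list (map f u) = (\<Sum>r<L. sum_list (map f (ws r)))"
proof (induction rule: msh.induct)
  case (mnil ws) then show ?case by simp
next
  case (mcons i ws c r u)
  have "(\<Sum>q<L. sum_list (map f ((ws(i:=r)) q))) = (\<Sum>q<L. sum_list (map f (ws q))) - sum_list (map f (ws i)) + sum_list (map f r)"
    using sum_upd[OF mcons(1), of "\<lambda>x. sum_list (map f x)"] by simp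
  then show ?case using mcons by simp
qed

lemma sum_list_ones: "sum_list (map (\<lambda>_. 1::int) xs) = int (length xs)"
  by (induction xs) auto

lemma msh_length: "msh L u ws \<Longrightarrow> length u = (\<Sum>r<L. length (ws r))"
proof -
  assume "msh L u ws"
  from msh_sum[OF this, of "\<lambda>_. 1"] have "int (length u) = (\<Sum>r<L. int (length (ws r)))"
    by (simp add: sum_list_ones)
  then show ?thesis by (simp flip: of_nat_sum)
qed

lemma msh_split:
  "msh L (x @ y) ws \<Longrightarrow> \<exists>ds. (\<forall>r<L. ds r \<le> length (ws r)) \<and>
     msh L x (\<lambda>r. take (ds r) (ws r)) \<and> msh L y (\<lambda>r. drop (ds r) (ws r))"
proof (induction x arbitrary: ws)
  case Nil
  then show ?case by (intro exI[of _ "\<lambda>_. 0"]) (auto intro: mnil)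
next
  case (Cons c x)
  from Cons.prems obtain i r where i: "i < L" "ws i = c # r" "msh L (x @ y) (ws(i := r))"
    by (auto elim: msh.cases)
  from Cons.IH[OF i(3)] obtain ds where ds: "\<forall>q<L. ds q \<le> length ((ws(i := r)) q)"
    "msh L x (\<lambda>q. take (ds q) ((ws(i := r)) q))" "msh L y (\<lambda>q. drop (ds q) ((ws(i := r)) q))"
    by blast
  define ds' where "ds' = ds(i := Suc (ds i))"
  have 1: "\<forall>q<L. ds' q \<le> length (ws q)" using ds(1) i by (auto simp: ds'_def)
  have eq1: "(\<lambda>q. take (ds' q) (ws q))(i := take (ds i) r) = (\<lambda>q. take (ds q) ((ws(i := r)) q))"
    by (auto simp: ds'_def)
  have 2: "msh L (c # x) (\<lambda>q. take (ds' q) (ws q))"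
  proof (rule mcons[OF i(1), of _ c "take (ds i) r"])
    show "take (ds' i) (ws i) = c # take (ds i) r" by (simp add: ds'_def i(2))
    show "msh L x ((\<lambda>q. take (ds' q) (ws q))(i := take (ds i) r))" by (subst eq1) (rule ds(2))
  qed
  have eq2: "(\<lambda>q. drop (ds' q) (ws q)) = (\<lambda>q. drop (ds q) ((ws(i := r)) q))"
    by (auto simp: ds'_def i(2))
  show ?case using 1 2 ds(3) eq2 by metis
qed

lemma msh_single: "ws 0 = x \<Longrightarrow> msh (Suc 0) x ws"
proof (induction x arbitrary: ws)
  case Nil then show ?case by (auto intro: mnil)
next
  case (Cons c x)
  show ?case by (rule mcons[of 0 "Suc 0" _ c x]) (auto intro: Cons.IH simp: Cons.prems)
qed

lemma msh_ins: "u \<in> shuffles v z \<Longrightarrow> msh L v ws \<Longrightarrow> msh (Suc L) u (ws(L := z))"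
proof (induction u arbitrary: v z ws)
  case Nil
  then have "v = []" "z = []" by auto
  with Nil.prems(2) have h: "\<And>i. i < L \<Longrightarrow> ws i = []" by (auto elim: msh.cases)
  show ?case using h \<open>z = []\<close> by (intro mnil) (auto simp: less_Suc_eq)
next
  case (Cons c u)
  from Cons.prems(1) consider (l) v' where "v = c # v'" "u \<in> shuffles v' z"
    | (r) z' where "z = c # z'" "u \<in> shuffles v z'"
    by (auto simp: Cons_in_shuffles_iff neq_Nil_conv)
  then show ?case
  proof cases
    case l
    from Cons.prems(2) l(1) obtain i r where i: "i < L" "ws i = c # r" "msh L v' (ws(i := r))"
      by (auto elim: msh.cases)
    have ih: "msh (Suc L) u ((ws(i := r))(L := z))" using Cons.IH[OF l(2) i(3)] .
    have eq: "(ws(L := z))(i := r) = (ws(i := r))(L := z)" using i(1) by (auto simp: fun_upd_twist)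
    show ?thesis
    proof (rule mcons[of i "Suc L" _ c r])
      show "i < Suc L" using i by simp
      show "(ws(L := z)) i = c # r" using i by simp
      show "msh (Suc L) u ((ws(L := z))(i := r))" by (subst eq) (rule ih)
    qed
  next
    case r
    have ih: "msh (Suc L) u (ws(L := z'))" using Cons.IH[OF r(2) Cons.prems(2)] .
    show ?thesis
    proof (rule mcons[of L "Suc L" _ c z'])
      show "(ws(L := z)) L = c # z'" using r by simp
      show "msh (Suc L) u ((ws(L := z))(L := z'))" using ih by simp
    qed simp
  qed
qed

lemma derives_msh:
  assumes "derives {w} x u"
  shows "\<exists>t. msh (Suc t) u (\<lambda>r. if r = 0 then x else w)"
  using assms unfolding derives_def
proof (induction rule: rtranclp_induct)
  case base
  show ?case by (rule exI[of _ 0], rule msh_single) simp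
next
  case (step y z)
  then obtain t where t: "msh (Suc t) y (\<lambda>r. if r = 0 then x else w)" by blast
  from step(2) have "z \<in> shuffles y w" by (simp add: derives1_def)
  from msh_ins[OF this t] have "msh (Suc (Suc t)) z ((\<lambda>r. if r = 0 then x else w)(Suc t := w))" .
  moreover have "((\<lambda>r. if r = 0 then x else w)(Suc t := w)) = (\<lambda>r. if r = 0 then x else w)"
    by auto
  ultimately show ?case by auto
qed

lemma msh_replicate: "msh L u ws \<Longrightarrow> u = replicate n c \<Longrightarrow> (\<forall>r<L. ws r = replicate (length (ws r)) c)"
proof (induction arbitrary: n rule: msh.induct)
  case (mnil ws) then show ?case by simp
next
  case (mcons i ws c' r u)
  then obtain n' where n': "n = Suc n'" "c' = c" "u = replicate n' c" by (cases n) auto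
  from mcons.IH[OF n'(3)] have h: "\<forall>q<L. (ws(i := r)) q = replicate (length ((ws(i := r)) q)) c" .
  show ?case
  proof (intro allI impI)
    fix q assume q: "q < L"
    show "ws q = replicate (length (ws q)) c"
    proof (cases "q = i")
      case True
      with h q have "r = replicate (length r) c" by auto
      then show ?thesis using True mcons(2) n'(2) by (metis length_Cons replicate_Suc)
    next
      case False with h q show ?thesis by auto
    qed
  qed
qed




definition Yw :: "nat \<Rightarrow> nat \<Rightarrow> nat \<Rightarrow> letter list" where
  "Yw k l m = replicate k a @ b # replicate (k+l) a @ b # replicate l a @ replicate m b @ replicate k a @ replicate (Suc m) b"
definition Vw :: "nat \<Rightarrow> nat \<Rightarrow> nat \<Rightarrow> letter list" where
  "Vw k l m = replicate (k+l) a @ replicate (Suc m) b"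
definition Fw :: "nat \<Rightarrow> nat \<Rightarrow> nat \<Rightarrow> letter list" where
  "Fw k l m = replicate (k+l) a @ b # replicate l a @ replicate m b @ replicate m b"
definition Ww :: "nat \<Rightarrow> nat \<Rightarrow> nat \<Rightarrow> letter list" where
  "Ww k l m = replicate k a @ b # replicate l a @ replicate m b"

fun hw :: "nat \<Rightarrow> nat \<Rightarrow> letter \<Rightarrow> int" where
  "hw K m a = int (Suc m)"
| "hw K m b = - int K"

definition ht :: "nat \<Rightarrow> nat \<Rightarrow> letter list \<Rightarrow> int" where
  "ht K m xs = sum_list (map (hw K m) xs)"

lemma ht_append[simp]: "ht K m (xs @ ys) = ht K m xs + ht K m ys"
  by (simp add: ht_def)
lemma ht_Cons[simp]: "ht K m (x # ys) = hw K m x + ht K m ys"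
  by (simp add: ht_def)
lemma ht_Nil[simp]: "ht K m [] = 0"
  by (simp add: ht_def)
lemma ht_rep[simp]: "ht K m (replicate n x) = int n * hw K m x"
  by (induction n) (auto simp: algebra_simps)

lemma wpow_shift:
  "wpow (replicate k a @ replicate (Suc m) b @ replicate l a) (Suc n) @ replicate k a
   = replicate k a @ replicate (Suc m) b @ concat (replicate n (Vw k l m)) @ replicate (k+l) a"
proof (induction n)
  case 0
  then show ?case by (simp add: wpow_def replicate_add[symmetric] add.commute)
next
  case (Suc n)
  have "wpow (replicate k a @ replicate (Suc m) b @ replicate l a) (Suc (Suc n)) @ replicate k a
     = (replicate k a @ replicate (Suc m) b @ replicate l a) @ (wpow (replicate k a @ replicate (Suc m) b @ replicate l a) (Suc n) @ replicate k a)"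
    by (simp add: wpow_def)
  also have "\<dots> = replicate k a @ replicate (Suc m) b @ concat (replicate (Suc n) (Vw k l m)) @ replicate (k+l) a"
    by (simp only: Suc) (simp add: Vw_def replicate_add[symmetric] add.commute)
  finally show ?case .
qed

lemma S_dec:
  assumes "1 \<le> n"
  shows "S k l m n = Yw k l m @ concat (replicate (n - 1) (Vw k l m)) @ Fw k l m"
proof -
  obtain n' where n: "n = Suc n'" using assms by (cases n) auto
  have "S k l m n = replicate k a @ [b] @ replicate l a @ replicate k a @ [b] @ replicate l a @ replicate m b
     @ (wpow (replicate k a @ replicate (m+1) b @ replicate l a) (Suc n') @ replicate k a) @ [b] @ replicate l a @ replicate m b @ replicate m b"
    by (simp add: S_def n)
  also have "\<dots> = Yw k l m @ concat (replicate n' (Vw k l m)) @ Fw k l m"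
    using wpow_shift[of k m l n'] by (simp add: Yw_def Fw_def replicate_add[symmetric] add.commute)
  finally show ?thesis by (simp add: n)
qed

lemma T0:
  assumes "take d (replicate y0 a @ b # z) = replicate y a @ replicate e b"
    and "d \<le> Suc (y0 + length z)"
  shows "y \<le> y0 \<and> (0 < e \<longrightarrow> y = y0)"
proof -
  let ?xs = "replicate y0 a @ b # z"
  have len: "d = y + e" using arg_cong[OF assms(1), of length] assms(2) by simp
  have nth: "\<And>q. q < d \<Longrightarrow> ?xs ! q = (replicate y a @ replicate e b) ! q"
    using assms(1) by (metis nth_take)
  show ?thesis
  proof (intro conjI impI)
    show "y \<le> y0"
    proof (rule ccontr)
      assume "\<not> y \<le> y0"
      then have "y0 < d" using len by simp
      from nth[OF this] \<open>\<not> y \<le> y0\<close> show False by (simp add: nth_append)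
    qed
    assume "0 < e"
    show "y = y0"
    proof (rule ccontr)
      assume "y \<noteq> y0"
      with \<open>y \<le> y0\<close> have "y < y0" by simp
      have "y < d" using len \<open>0 < e\<close> by simp
      from nth[OF this] \<open>y < y0\<close> \<open>0 < e\<close> show False by (simp add: nth_append)
    qed
  qed
qed

lemma T1:
  assumes "take d (replicate y0 a @ b # a # z) = replicate y a @ replicate e b"
    and "d \<le> Suc (Suc (y0 + length z))"
  shows "y \<le> y0 \<and> e \<le> 1 \<and> (0 < e \<longrightarrow> y = y0)"
proof -
  let ?xs = "replicate y0 a @ b # a # z"
  have t0: "y \<le> y0 \<and> (0 < e \<longrightarrow> y = y0)" using T0[of d y0 "a # z" y e] assms by simp
  have len: "d = y + e" using arg_cong[OF assms(1), of length] assms(2) by simp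
  have nth: "\<And>q. q < d \<Longrightarrow> ?xs ! q = (replicate y a @ replicate e b) ! q"
    using assms(1) by (metis nth_take)
  have "e \<le> 1"
  proof (rule ccontr)
    assume "\<not> e \<le> 1"
    then have "y = y0" using t0 by simp
    have "Suc y0 < d" using len \<open>\<not> e \<le> 1\<close> \<open>y = y0\<close> by simp
    from nth[OF this] \<open>y = y0\<close> \<open>\<not> e \<le> 1\<close> show False by (simp add: nth_append)
  qed
  with t0 show ?thesis by simp
qed




context
  fixes k l m :: nat
  assumes lk: "l < k" and l1: "1 \<le> l" and m1: "1 \<le> m"
begin

lemma ht_V: "ht (k+l) m (Vw k l m) = 0"
  by (simp add: Vw_def algebra_simps)

lemma ht_Vs: "ht (k+l) m (concat (replicate q (Vw k l m))) = 0"
  by (induction q) (simp_all add: ht_V)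

lemma ht_Y: "ht (k+l) m (Yw k l m) = int m * int k - int l"
  by (simp add: Yw_def algebra_simps)

lemma ht_kb: "ht (k+l) m (replicate k a @ [b]) = int m * int k - int l"
  by (simp add: algebra_simps)

lemma copy_ht:
  "0 \<le> ht (k+l) m (take n (Ww k l m)) \<and>
   (ht (k+l) m (take n (Ww k l m)) = 0 \<longrightarrow> n = 0 \<or> length (Ww k l m) \<le> n)"
proof -
  have m2: "(2::int) \<le> int (Suc m)" using m1 by simp
  consider (A) "n \<le> k" | (B) y where "n = Suc k + y" "y \<le> l" | (C) z where "n = Suc k + l + z" "z \<le> m"
    | (D) "Suc k + l + m < n"
  proof -
    assume hA: "n \<le> k \<Longrightarrow> thesis"
      and hB: "\<And>y. n = Suc k + y \<Longrightarrow> y \<le> l \<Longrightarrow> thesis"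
      and hC: "\<And>z. n = Suc k + l + z \<Longrightarrow> z \<le> m \<Longrightarrow> thesis"
      and hD: "Suc k + l + m < n \<Longrightarrow> thesis"
    show thesis
    proof (cases "n \<le> k")
      case True then show ?thesis by (rule hA)
    next
      case F1: False
      show ?thesis
      proof (cases "n \<le> Suc k + l")
        case True then show ?thesis using F1 by (intro hB[of "n - Suc k"]) auto
      next
        case F2: False
        show ?thesis
        proof (cases "n \<le> Suc k + l + m")
          case True then show ?thesis using F2 by (intro hC[of "n - Suc k - l"]) auto
        next
          case False then show ?thesis by (intro hD) auto
        qed
      qed
    qed
  qed
  then show ?thesis
  proof cases
    case A
    then have "take n (Ww k l m) = replicate n a" by (simp add: Ww_def)
    then show ?thesis by auto
  next
    case B
    then have "take n (Ww k l m) = replicate k a @ b # replicate y a" by (simp add: Ww_def)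
    moreover have "int (k+y) * int (Suc m) \<ge> int (k+y) * 2" using m2 by (intro mult_left_mono) auto
    ultimately have "ht (k+l) m (take n (Ww k l m)) > 0" using lk by (simp add: algebra_simps)
    then show ?thesis by simp
  next
    case C
    then have "take n (Ww k l m) = replicate k a @ b # replicate l a @ replicate z b" by (simp add: Ww_def)
    then have "ht (k+l) m (take n (Ww k l m)) = int (m - z) * int (k+l)" using C(2)
      by (simp add: algebra_simps of_nat_diff)
    moreover have "int (m - z) * int (k+l) = 0 \<Longrightarrow> z = m" using C(2) lk by simp
    ultimately show ?thesis using C lk by (simp add: Ww_def)
  next
    case D
    then have "take n (Ww k l m) = Ww k l m" by (simp add: Ww_def)
    then show ?thesis using D by (simp add: Ww_def algebra_simps)
  qed
qed

lemma Y_class: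
  assumes "p \<le> length (Yw k l m)" "ht (k+l) m (take p (Yw k l m)) \<le> int m * int k - int l"
  shows "p \<le> Suc k \<or> p = length (Yw k l m)"
proof (rule ccontr)
  assume "\<not> (p \<le> Suc k \<or> p = length (Yw k l m))"
  then have p1: "Suc k < p" and p2: "p < Suc k + (k+l) + 1 + l + m + k + Suc m"
    using assms(1) by (auto simp: Yw_def)
  let ?h = "ht (k+l) m (take p (Yw k l m))"
  let ?c = "int m * int k - int l"
  have "?h > ?c"
  proof (cases "p \<le> Suc k + (k+l)")
    case True
    define y where "y = p - Suc k"
    have py: "p = Suc k + y" "1 \<le> y" "y \<le> k + l" using True p1 by (auto simp: y_def)
    have "take p (Yw k l m) = replicate k a @ b # replicate y a" using py by (simp add: Yw_def)
    then have "?h = ?c + int y * int (Suc m)" by (simp add: algebra_simps)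
    moreover have "int y * int (Suc m) > 0" using py by simp
    ultimately show ?thesis by linarith
  next
    case F1: False
    show ?thesis
    proof (cases "p \<le> Suc k + (k+l) + 1 + l")
      case True
      define y where "y = p - (Suc k + (k+l) + 1)"
      have py: "p = Suc k + (k+l) + 1 + y" "y \<le> l" using True F1 by (auto simp: y_def)
      have "take p (Yw k l m) = replicate k a @ b # replicate (k+l) a @ b # replicate y a" using py by (simp add: Yw_def)
      then have "?h = ?c + int m * int (k+l) + int y * int (Suc m)" by (simp add: algebra_simps)
      moreover have "int m * int (k+l) > 0" using m1 lk by simp
      moreover have "int y * int (Suc m) \<ge> 0" by simp
      ultimately show ?thesis by linarith
    next
      case F2: False
      show ?thesis
      proof (cases "p \<le> Suc k + (k+l) + 1 + l + m")
        case True
        define z where "z = p - (Suc k + (k+l) + 1 + l)"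
        have pz: "p = Suc k + (k+l) + 1 + l + z" "z \<le> m" "1 \<le> z" using True F2 by (auto simp: z_def)
        have "take p (Yw k l m) = replicate k a @ b # replicate (k+l) a @ b # replicate l a @ replicate z b"
          using pz by (simp add: Yw_def)
        then have "?h = int m * int (k+l) + int (m - z) * int (k+l)" using pz(2)
          by (simp add: algebra_simps of_nat_diff)
        moreover have "int (m - z) * int (k+l) \<ge> 0" by simp
        moreover have "int m * int (k+l) > ?c" using l1 by (simp add: algebra_simps add_pos_nonneg)
        ultimately show ?thesis by linarith
      next
        case F3: False
        show ?thesis
        proof (cases "p \<le> Suc k + (k+l) + 1 + l + m + k")
          case True
          define y where "y = p - (Suc k + (k+l) + 1 + l + m)"
          have py: "p = Suc k + (k+l) + 1 + l + m + y" "y \<le> k" "1 \<le> y" using True F3 by (auto simp: y_def)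
          have "take p (Yw k l m) = replicate k a @ b # replicate (k+l) a @ b # replicate l a @ replicate m b @ replicate y a"
            using py by (simp add: Yw_def)
          then have "?h = int m * int (k+l) + int y * int (Suc m)" by (simp add: algebra_simps)
          moreover have "int y * int (Suc m) \<ge> 0" by simp
          moreover have "int m * int (k+l) > ?c" using l1 by (simp add: algebra_simps add_pos_nonneg)
          ultimately show ?thesis by linarith
        next
          case F4: False
          define z where "z = p - (Suc k + (k+l) + 1 + l + m + k)"
          have pz: "p = Suc k + (k+l) + 1 + l + m + k + z" "z \<le> m" "1 \<le> z" using F4 p2 by (auto simp: z_def)
          have "take p (Yw k l m) = replicate k a @ b # replicate (k+l) a @ b # replicate l a @ replicate m b @ replicate k a @ replicate z b"
            using pz by (simp add: Yw_def del: replicate_Suc)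
          then have "?h = int k * int (Suc m) + int (m - z) * int (k+l)" using pz(2)
            by (simp add: algebra_simps of_nat_diff)
          moreover have "int (m - z) * int (k+l) \<ge> 0" by simp
          moreover have "int k * int (Suc m) > ?c" using l1 by (simp add: algebra_simps)
          ultimately show ?thesis by linarith
        qed
      qed
    qed
  qed
  with assms(2) show False by simp
qed

end



context
  fixes k l m :: nat
  assumes lk: "l < k" and l1: "1 \<le> l" and m1: "1 \<le> m"
begin

lemma G:
  assumes "msh L (Vw k l m @ rest) rem"
  shows "\<exists>ds y e. (\<forall>r<L. ds r \<le> length (rem r)) \<and> msh L rest (\<lambda>r. drop (ds r) (rem r)) \<and>
     (\<forall>r<L. take (ds r) (rem r) = replicate (y r) a @ replicate (e r) b \<and> ds r = y r + e r) \<and>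
     (\<Sum>r<L. y r) = k + l \<and> (\<Sum>r<L. e r) = Suc m"
proof -
  from msh_split[OF assms] obtain ds where ds: "\<forall>r<L. ds r \<le> length (rem r)"
    "msh L (Vw k l m) (\<lambda>r. take (ds r) (rem r))" "msh L rest (\<lambda>r. drop (ds r) (rem r))" by blast
  let ?ch = "\<lambda>r. take (ds r) (rem r)"
  from msh_split[of L "replicate (k+l) a" "replicate (Suc m) b" ?ch] ds(2) obtain ea where
    ea: "msh L (replicate (k+l) a) (\<lambda>r. take (ea r) (?ch r))" "msh L (replicate (Suc m) b) (\<lambda>r. drop (ea r) (?ch r))"
    by (auto simp: Vw_def)
  define y where "y r = length (take (ea r) (?ch r))" for r
  define e where "e r = length (drop (ea r) (?ch r))" for r
  have ry: "\<forall>r<L. take (ea r) (?ch r) = replicate (y r) a"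
    using msh_replicate[OF ea(1) refl] by (simp add: y_def)
  have re: "\<forall>r<L. drop (ea r) (?ch r) = replicate (e r) b"
    using msh_replicate[OF ea(2) refl] by (simp add: e_def)
  have c: "\<forall>r<L. ?ch r = replicate (y r) a @ replicate (e r) b \<and> ds r = y r + e r"
  proof (intro allI impI conjI)
    fix r assume "r < L"
    then show "?ch r = replicate (y r) a @ replicate (e r) b"
      using ry re by (metis append_take_drop_id)
    have "length (?ch r) = ds r" using ds(1) \<open>r < L\<close> by simp
    then show "ds r = y r + e r" using \<open>?ch r = _\<close> by simp
  qed
  have sy: "(\<Sum>r<L. y r) = k + l" using msh_length[OF ea(1)] by (simp add: y_def)
  have se: "(\<Sum>r<L. e r) = Suc m" using msh_length[OF ea(2)] by (simp add: e_def)
  show ?thesis using ds(1,3) c sy se by blast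
qed

lemma Ww_form: "Ww k l m = replicate k a @ b # a # (replicate (l - 1) a @ replicate m b)"
proof -
  obtain l' where "l = Suc l'" using l1 by (cases l) auto
  then show ?thesis by (simp add: Ww_def)
qed

lemma unit:
  assumes cp: "\<forall>q<t. rem (Suc q) = [] \<or> rem (Suc q) = Ww k l m"
    and r0: "rem 0 = replicate (k+l) a @ b # z"
    and ch: "\<forall>r<Suc t. take (ds r) (rem r) = replicate (y r) a @ replicate (e r) b \<and> ds r = y r + e r"
    and bd: "\<forall>r<Suc t. ds r \<le> length (rem r)"
    and sy: "(\<Sum>r<Suc t. y r) = k + l" and se: "(\<Sum>r<Suc t. e r) = Suc m"
  shows "y 0 = k + l \<and> e 0 = Suc m \<and> (\<forall>q<t. ds (Suc q) = 0)"
proof -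
  have cpy: "k * e (Suc q) \<le> y (Suc q)" if q: "q < t" for q
  proof -
    from cp q consider "rem (Suc q) = []" | "rem (Suc q) = Ww k l m" by blast
    then show ?thesis
    proof cases
      case 1
      then have "ds (Suc q) = 0" using bd q by auto
      then show ?thesis using ch q by auto
    next
      case 2
      have t: "take (ds (Suc q)) (replicate k a @ b # a # (replicate (l - 1) a @ replicate m b))
            = replicate (y (Suc q)) a @ replicate (e (Suc q)) b"
        using ch q 2 Ww_form by auto
      have "ds (Suc q) \<le> Suc (Suc (k + length (replicate (l - 1) a @ replicate m b)))"
      proof -
        have "ds (Suc q) \<le> length (Ww k l m)" using bd q 2 by auto
        also have "\<dots> = Suc (Suc (k + length (replicate (l - 1) a @ replicate m b)))"
          by (subst Ww_form) simp
        finally show ?thesis .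
      qed
      from T1[OF t this] show ?thesis
        by (cases "e (Suc q)") auto
    qed
  qed
  have p0: "y 0 \<le> k + l \<and> (0 < e 0 \<longrightarrow> y 0 = k + l)"
  proof -
    have t: "take (ds 0) (replicate (k+l) a @ b # z) = replicate (y 0) a @ replicate (e 0) b"
      using ch r0 by auto
    have "ds 0 \<le> length (rem 0)" using bd by auto
    then have "ds 0 \<le> Suc (k + l + length z)" using r0 by simp
    from T0[OF t this] show ?thesis .
  qed
  have sy': "y 0 + (\<Sum>q<t. y (Suc q)) = k + l" using sy by (simp only: sum.lessThan_Suc_shift)
  have se': "e 0 + (\<Sum>q<t. e (Suc q)) = Suc m" using se by (simp only: sum.lessThan_Suc_shift)
  have ineq: "k * (\<Sum>q<t. e (Suc q)) \<le> (\<Sum>q<t. y (Suc q))"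
    unfolding sum_distrib_left using cpy by (intro sum_mono) auto
  have e0: "0 < e 0"
  proof (rule ccontr)
    assume "\<not> 0 < e 0"
    then have "(\<Sum>q<t. e (Suc q)) = Suc m" using se' by simp
    with ineq sy' have "k * Suc m \<le> k + l" by simp
    moreover have "k \<le> k * m" using m1 by simp
    ultimately show False using lk by simp
  qed
  with p0 have y0: "y 0 = k + l" by simp
  with sy' have ys: "(\<Sum>q<t. y (Suc q)) = 0" by simp
  with ineq have "k * (\<Sum>q<t. e (Suc q)) = 0" by simp
  then have es: "(\<Sum>q<t. e (Suc q)) = 0" using lk by simp
  have "\<forall>q<t. ds (Suc q) = 0"
  proof (intro allI impI)
    fix q assume "q < t"
    then have "y (Suc q) = 0" "e (Suc q) = 0" using ys es by auto
    then show "ds (Suc q) = 0" using ch \<open>q < t\<close> by auto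
  qed
  then show ?thesis using y0 es se' by simp
qed

end



context
  fixes k l m :: nat
  assumes lk: "l < k" and l1: "1 \<le> l" and m1: "1 \<le> m"
begin

abbreviation "c0 \<equiv> int m * int k - int l"

lemma ht_F: "ht (k+l) m (Fw k l m) = - c0"
  by (simp add: Fw_def algebra_simps)

lemma ht_VsF: "ht (k+l) m (concat (replicate q (Vw k l m)) @ Fw k l m) = - c0"
  using ht_Vs[OF lk l1 m1] ht_F by simp

lemma ht_S: "1 \<le> n \<Longrightarrow> ht (k+l) m (S k l m n) = 0"
  using ht_Y[OF lk l1 m1] ht_VsF by (simp add: S_dec)

lemma ht_Ww: "ht (k+l) m (Ww k l m) = 0"
  by (simp add: Ww_def algebra_simps)

lemma ht_take: "ht K m (take n x) = ht K m x - ht K m (drop n x)"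
  by (metis add_diff_cancel_right' append_take_drop_id ht_append)

lemma Hsum:
  assumes "\<forall>r<L. ht (k+l) m (W r) = 0" "msh L X (\<lambda>r. drop (ns r) (W r))" "ht (k+l) m X = - c0"
  shows "(\<Sum>r<L. ht (k+l) m (take (ns r) (W r))) = c0"
proof -
  have "(\<Sum>r<L. ht (k+l) m (take (ns r) (W r))) = (\<Sum>r<L. - ht (k+l) m (drop (ns r) (W r)))"
    using assms(1) by (intro sum.cong) (auto simp: ht_take)
  also have "\<dots> = - (\<Sum>r<L. ht (k+l) m (drop (ns r) (W r)))" by (simp add: sum_negf)
  also have "(\<Sum>r<L. ht (k+l) m (drop (ns r) (W r))) = ht (k+l) m X"
    using msh_sum[OF assms(2), of "hw (k+l) m"] by (simp add: ht_def)
  finally show ?thesis using assms(3) by simp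
qed

lemma copies:
  assumes W0: "W 0 = S k l m i" and Ws: "\<forall>q<t. W (Suc q) = Ww k l m"
    and bd: "\<forall>r<Suc t. ns r \<le> length (W r)"
    and sm: "(\<Sum>r<Suc t. ht (k+l) m (take (ns r) (W r))) = c0"
  shows "ht (k+l) m (take (ns 0) (W 0)) \<le> c0"
    and "ht (k+l) m (take (ns 0) (W 0)) = c0 \<Longrightarrow> \<forall>q<t. ns (Suc q) = 0 \<or> ns (Suc q) = length (Ww k l m)"
proof -
  have split: "ht (k+l) m (take (ns 0) (W 0)) + (\<Sum>q<t. ht (k+l) m (take (ns (Suc q)) (Ww k l m))) = c0"
  proof -
    have "(\<Sum>q<t. ht (k+l) m (take (ns (Suc q)) (W (Suc q)))) = (\<Sum>q<t. ht (k+l) m (take (ns (Suc q)) (Ww k l m)))"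
      using Ws by (intro sum.cong) auto
    then show ?thesis using sm by (simp only: sum.lessThan_Suc_shift)
  qed
  have nn: "\<And>q. 0 \<le> ht (k+l) m (take (ns (Suc q)) (Ww k l m))"
    using copy_ht[OF lk l1 m1] by blast
  have "0 \<le> (\<Sum>q<t. ht (k+l) m (take (ns (Suc q)) (Ww k l m)))" using nn by (intro sum_nonneg) auto
  then show "ht (k+l) m (take (ns 0) (W 0)) \<le> c0" using split by linarith
  assume "ht (k+l) m (take (ns 0) (W 0)) = c0"
  then have z: "(\<Sum>q<t. ht (k+l) m (take (ns (Suc q)) (Ww k l m))) = 0" using split by simp
  show "\<forall>q<t. ns (Suc q) = 0 \<or> ns (Suc q) = length (Ww k l m)"
  proof (intro allI impI)
    fix q assume q: "q < t"
    have "ht (k+l) m (take (ns (Suc q)) (Ww k l m)) = 0"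
      using z nn q by (subst (asm) sum_nonneg_eq_0_iff) auto
    then have "ns (Suc q) = 0 \<or> length (Ww k l m) \<le> ns (Suc q)" using copy_ht[OF lk l1 m1] by blast
    moreover have "ns (Suc q) \<le> length (Ww k l m)" using bd q Ws by fastforce
    ultimately show "ns (Suc q) = 0 \<or> ns (Suc q) = length (Ww k l m)" by linarith
  qed
qed

end



context
  fixes k l m :: nat
  assumes lk: "l < k" and l1: "1 \<le> l" and m1: "1 \<le> m"
begin

lemma core:
  assumes ij: "1 \<le> i" "i < j" and M: "msh (Suc t) (S k l m j) W"
    and W0: "W 0 = S k l m i" and Ws: "\<forall>q<t. W (Suc q) = Ww k l m"
  shows False
proof -
  define L where "L = Suc t"
  define Vs where "Vs q = concat (replicate q (Vw k l m))" for q
  define Y where "Y = Yw k l m"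
  define V where "V = Vw k l m"
  define Fi where "Fi = Fw k l m"
  define Si where "Si = S k l m i"
  obtain l' where l': "l = Suc l'" using l1 by (cases l) auto
  obtain K' where K': "k + l = Suc K'" using l1 by (intro that[of "k + l - 1"]) simp
  have Sj: "S k l m j = Y @ (Vs (j - 1) @ Fi)" using S_dec[of j k l m] ij by (simp add: Y_def Vs_def Fi_def)
  have SiE: "Si = Y @ Vs (i - 1) @ Fi" using S_dec[of i k l m] ij by (simp add: Si_def Y_def Vs_def Fi_def)
  have Vs_add: "Vs (p + q) = Vs p @ Vs q" for p q by (simp add: Vs_def replicate_add)
  have Vs_Suc: "Vs (Suc q) = V @ Vs q" for q by (simp add: Vs_def V_def)
  have Vs0: "Vs 0 = []" by (simp add: Vs_def)
  have len_Vs: "length (Vs q) = q * length V" for q by (induction q) (simp_all add: Vs_Suc Vs0)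
  have hW: "\<forall>r<L. ht (k+l) m (W r) = 0"
    using W0 Ws ht_S[OF lk l1 m1] ht_Ww[OF lk l1 m1] ij unfolding L_def
    by (metis less_Suc_eq_0_disj)
  have hX: "ht (k+l) m (Vs q @ Fi) = - (int m * int k - int l)" for q using ht_VsF[OF lk l1 m1] by (simp add: Vs_def Fi_def)
  have Wsi: "W 0 = Si" using W0 by (simp add: Si_def)
  have lenW0: "length (W 0) = length Y + (i - 1) * length V + length Fi" using Wsi SiE len_Vs by simp
  have lenY: "length Y = k + 1 + (k + l) + 1 + l + m + k + Suc m" by (simp add: Y_def Yw_def)
  have lenV: "length V = k + l + Suc m" by (simp add: V_def Vw_def)
  define Inv where "Inv n ns \<longleftrightarrow> (\<forall>r<L. ns r \<le> length (W r)) \<and> msh L (Vs (j - n) @ Fi) (\<lambda>r. drop (ns r) (W r))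
      \<and> (ns 0 \<le> Suc k \<or> (n \<le> i \<and> ns 0 = length Y + (n - 1) * length V))" for n ns
  have cps: "\<forall>q<t. drop (ns (Suc q)) (W (Suc q)) = [] \<or> drop (ns (Suc q)) (W (Suc q)) = Ww k l m"
    if bd: "\<forall>r<L. ns r \<le> length (W r)" and ms: "msh L (Vs q @ Fi) (\<lambda>r. drop (ns r) (W r))"
      and h0: "ht (k+l) m (take (ns 0) (W 0)) = (int m * int k - int l)" for ns q
  proof -
    have sm: "(\<Sum>r<Suc t. ht (k+l) m (take (ns r) (W r))) = (int m * int k - int l)"
      using Hsum[OF lk l1 m1 hW ms hX] by (simp add: L_def)
    have "\<forall>q<t. ns (Suc q) = 0 \<or> ns (Suc q) = length (Ww k l m)"
      using copies(2)[OF lk l1 m1 W0 Ws _ sm h0] bd by (simp add: L_def)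
    then show ?thesis using Ws by auto
  qed
  have step: "\<exists>ns'. Inv (Suc n) ns'" if n1: "1 \<le> n" and nj: "n < j" and I: "Inv n ns" for n ns
  proof -
    from I have bd: "\<forall>r<L. ns r \<le> length (W r)" and ms: "msh L (Vs (j - n) @ Fi) (\<lambda>r. drop (ns r) (W r))"
      and pc: "ns 0 \<le> Suc k \<or> (n \<le> i \<and> ns 0 = length Y + (n - 1) * length V)" by (auto simp: Inv_def)
    have "Vs (j - n) @ Fi = Vw k l m @ (Vs (j - Suc n) @ Fi)"
      using nj Vs_Suc[of "j - Suc n"] by (simp add: V_def Suc_diff_Suc)
    with ms have ms': "msh L (Vw k l m @ (Vs (j - Suc n) @ Fi)) (\<lambda>r. drop (ns r) (W r))" by simp
    from G[OF lk l1 m1 ms'] obtain ds y e where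
      g: "\<forall>r<L. ds r \<le> length (drop (ns r) (W r))" "msh L (Vs (j - Suc n) @ Fi) (\<lambda>r. drop (ds r) (drop (ns r) (W r)))"
      "\<forall>r<L. take (ds r) (drop (ns r) (W r)) = replicate (y r) a @ replicate (e r) b \<and> ds r = y r + e r"
      "(\<Sum>r<L. y r) = k + l" "(\<Sum>r<L. e r) = Suc m" by blast
    define ns' where "ns' r = ns r + ds r" for r
    have bd': "\<forall>r<L. ns' r \<le> length (W r)"
    proof (intro allI impI)
      fix r assume "r < L"
      then have "ds r \<le> length (W r) - ns r" "ns r \<le> length (W r)" using g(1) bd by auto
      then show "ns' r \<le> length (W r)" by (simp add: ns'_def)
    qed
    have ms2: "msh L (Vs (j - Suc n) @ Fi) (\<lambda>r. drop (ns' r) (W r))"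
      using g(2) by (simp add: ns'_def add.commute)
    have ch0: "take (ds 0) (drop (ns 0) (W 0)) = replicate (y 0) a @ replicate (e 0) b" "ds 0 = y 0 + e 0"
      "ds 0 \<le> length (drop (ns 0) (W 0))"
      using g(1,3) by (auto simp: L_def)
    have U: "y 0 = k + l \<and> e 0 = Suc m \<and> (\<forall>q<t. ds (Suc q) = 0)"
      if cp: "\<forall>q<t. drop (ns (Suc q)) (W (Suc q)) = [] \<or> drop (ns (Suc q)) (W (Suc q)) = Ww k l m"
        and r0: "drop (ns 0) (W 0) = replicate (k+l) a @ b # z" for z
      by (rule unit[OF lk l1 m1 cp r0 g(3)[unfolded L_def] g(1)[unfolded L_def] g(4)[unfolded L_def] g(5)[unfolded L_def]])
    have noT: False if cp: "\<forall>q<t. drop (ns (Suc q)) (W (Suc q)) = [] \<or> drop (ns (Suc q)) (W (Suc q)) = Ww k l m"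
        and r0: "drop (ns 0) (W 0) = replicate (k+l) a @ b # a # z" for z
    proof -
      from U[OF cp r0] have "e 0 = Suc m" by simp
      moreover have "e 0 \<le> 1"
        using T1[of "ds 0" "k+l" z "y 0" "e 0"] ch0 r0 by simp
      ultimately show False using m1 by simp
    qed
    from pc consider (A) "ns 0 \<le> k" | (B) "ns 0 = Suc k" | (C) "n \<le> i" "ns 0 = length Y + (n - 1) * length V"
      by linarith
    then show ?thesis
    proof cases
      case A
      have r0: "drop (ns 0) (W 0) = replicate (k - ns 0) a @ b # a # (replicate K' a @ b # replicate l a @ replicate m b @ replicate k a @ replicate (Suc m) b @ Vs (i - 1) @ Fi)"
        using A K' by (simp add: Wsi SiE Y_def Yw_def)
      have "y 0 \<le> k - ns 0 \<and> e 0 \<le> 1 \<and> (0 < e 0 \<longrightarrow> y 0 = k - ns 0)"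
        using T1[of "ds 0" "k - ns 0" _ "y 0" "e 0"] ch0 r0 by simp
      then have "ns' 0 \<le> Suc k" using A ch0(2) by (auto simp: ns'_def)
      then show ?thesis using bd' ms2 by (auto simp: Inv_def)
    next
      case B
      have "take (ns 0) (W 0) = replicate k a @ [b]" using B by (simp add: Wsi SiE Y_def Yw_def)
      then have h0: "ht (k+l) m (take (ns 0) (W 0)) = (int m * int k - int l)" using ht_kb[OF lk l1 m1] by simp
      have cp: "\<forall>q<t. drop (ns (Suc q)) (W (Suc q)) = [] \<or> drop (ns (Suc q)) (W (Suc q)) = Ww k l m"
        using cps[OF bd ms h0] .
      have r0: "drop (ns 0) (W 0) = replicate (k+l) a @ b # a # (replicate l' a @ replicate m b @ replicate k a @ replicate (Suc m) b @ Vs (i - 1) @ Fi)"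
        using B l' by (simp add: Wsi SiE Y_def Yw_def)
      from noT[OF cp r0] show ?thesis ..
    next
      case C
      have Si2: "Si = (Y @ Vs (n - 1)) @ Vs (i - n) @ Fi"
        using SiE Vs_add[of "n - 1" "i - n"] C(1) n1 by simp
      have lp: "length (Y @ Vs (n - 1)) = ns 0" using C(2) len_Vs by simp
      have tk: "take (ns 0) (W 0) = Y @ Vs (n - 1)" using Si2 lp Wsi by (metis append_eq_conv_conj)
      have dr: "drop (ns 0) (W 0) = Vs (i - n) @ Fi" using Si2 lp Wsi by (metis append_eq_conv_conj)
      have h0: "ht (k+l) m (take (ns 0) (W 0)) = (int m * int k - int l)"
        using tk ht_Y[OF lk l1 m1] ht_Vs[OF lk l1 m1] by (simp add: Y_def Vs_def)
      have cp: "\<forall>q<t. drop (ns (Suc q)) (W (Suc q)) = [] \<or> drop (ns (Suc q)) (W (Suc q)) = Ww k l m"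
        using cps[OF bd ms h0] .
      show ?thesis
      proof (cases "n = i")
        case True
        have r0: "drop (ns 0) (W 0) = replicate (k+l) a @ b # a # (replicate l' a @ replicate m b @ replicate m b)"
          using dr True l' by (simp add: Vs_def Fi_def Fw_def)
        from noT[OF cp r0] show ?thesis ..
      next
        case False
        with C(1) have ni: "n < i" by simp
        have r0: "drop (ns 0) (W 0) = replicate (k+l) a @ b # (replicate m b @ Vs (i - Suc n) @ Fi)"
          using dr ni Vs_Suc[of "i - Suc n"] by (simp add: V_def Vw_def Suc_diff_Suc)
        from U[OF cp r0] have u: "y 0 = k + l" "e 0 = Suc m" by auto
        have "ns' 0 = length Y + n * length V"
          using C(2) u ch0(2) lenV n1 by (cases n) (auto simp: ns'_def)
        then show ?thesis using bd' ms2 ni by (auto simp: Inv_def)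
      qed
    qed
  qed
  have base: "\<exists>ns. Inv 1 ns"
  proof -
    from msh_split[of L Y "Vs (j - 1) @ Fi" W] M Sj obtain ds where
      ds: "\<forall>r<L. ds r \<le> length (W r)" "msh L Y (\<lambda>r. take (ds r) (W r))" "msh L (Vs (j - 1) @ Fi) (\<lambda>r. drop (ds r) (W r))"
      by (auto simp: L_def)
    have sm: "(\<Sum>r<Suc t. ht (k+l) m (take (ds r) (W r))) = (int m * int k - int l)"
      using Hsum[OF lk l1 m1 hW ds(3) hX] by (simp add: L_def)
    have hle: "ht (k+l) m (take (ds 0) (W 0)) \<le> (int m * int k - int l)"
      using copies(1)[OF lk l1 m1 W0 Ws _ sm] ds(1) by (simp add: L_def)
    have "length Y = (\<Sum>r<L. length (take (ds r) (W r)))" using msh_length[OF ds(2)] .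
    moreover have "length (take (ds 0) (W 0)) \<le> (\<Sum>r<L. length (take (ds r) (W r)))"
      by (rule member_le_sum) (auto simp: L_def)
    ultimately have d0: "ds 0 \<le> length Y" using ds(1) by (simp add: L_def)
    have "take (ds 0) (W 0) = take (ds 0) (Yw k l m)" using d0 Wsi SiE by (simp add: Y_def)
    with hle d0 have "ds 0 \<le> Suc k \<or> ds 0 = length Y"
      using Y_class[OF lk l1 m1, of "ds 0"] by (simp add: Y_def)
    then show ?thesis using ds(1,3) ij by (auto simp: Inv_def)
  qed
  have all: "\<forall>n. 1 \<le> n \<longrightarrow> n \<le> j \<longrightarrow> (\<exists>ns. Inv n ns)"
  proof
    fix n show "1 \<le> n \<longrightarrow> n \<le> j \<longrightarrow> (\<exists>ns. Inv n ns)"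
    proof (induction n)
      case 0 then show ?case by simp
    next
      case (Suc n)
      show ?case
      proof (cases "n = 0")
        case True then show ?thesis using base by simp
      next
        case False
        then show ?thesis using Suc step by auto
      qed
    qed
  qed
  have "\<exists>ns. Inv j ns" using all[rule_format, of j] ij by simp
  then obtain ns where I: "Inv j ns" by blast
  then have bd: "\<forall>r<L. ns r \<le> length (W r)" and ms: "msh L (Vs 0 @ Fi) (\<lambda>r. drop (ns r) (W r))"
    and pc: "ns 0 \<le> Suc k" using ij by (auto simp: Inv_def)
  have "length (Vs 0 @ Fi) = (\<Sum>r<L. length (drop (ns r) (W r)))" using msh_length[OF ms] .
  moreover have "length (drop (ns 0) (W 0)) \<le> (\<Sum>r<L. length (drop (ns r) (W r)))"
    by (rule member_le_sum) (auto simp: L_def)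
  ultimately have "length (W 0) - ns 0 \<le> length Fi" by (simp add: Vs_def)
  with lenW0 lenY pc show False by simp
qed

end

theorem lemma7:
  fixes k l m i j :: nat
  assumes "k > l" and "l \<ge> 1" and "m \<ge> 1" and "i \<ge> 1" and "j \<ge> 1"
  shows "derives {replicate k a @ [b] @ replicate l a @ replicate m b} (S k l m i) (S k l m j)
           \<longleftrightarrow> i = j"
proof
  assume d: "derives {replicate k a @ [b] @ replicate l a @ replicate m b} (S k l m i) (S k l m j)"
  have w: "replicate k a @ [b] @ replicate l a @ replicate m b = Ww k l m" by (simp add: Ww_def)
  from derives_msh[OF d[unfolded w]] obtain t where
    M: "msh (Suc t) (S k l m j) (\<lambda>r. if r = 0 then S k l m i else Ww k l m)" by blast
  have "length (S k l m j) = (\<Sum>r<Suc t. length (if r = 0 then S k l m i else Ww k l m))"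
    using msh_length[OF M] .
  moreover have "length (if 0 = (0::nat) then S k l m i else Ww k l m) \<le> (\<Sum>r<Suc t. length (if r = 0 then S k l m i else Ww k l m))"
    by (rule member_le_sum[of 0 "{..<Suc t}" "\<lambda>r. length (if r = 0 then S k l m i else Ww k l m)"]) auto
  ultimately have le: "length (S k l m i) \<le> length (S k l m j)" by simp
  have len: "length (S k l m n) = length (Yw k l m) + (n - 1) * length (Vw k l m) + length (Fw k l m)" if "1 \<le> n" for n
  proof -
    have "length (concat (replicate q (Vw k l m))) = q * length (Vw k l m)" for q by (induction q) simp_all
    then show ?thesis using S_dec[OF that] by simp
  qed
  have "\<not> j < i"
  proof
    assume "j < i"
    then have "j - 1 < i - 1" using assms by simp
    moreover have "0 < length (Vw k l m)" by (simp add: Vw_def)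
    ultimately have "(j - 1) * length (Vw k l m) < (i - 1) * length (Vw k l m)"
      by (rule mult_strict_right_mono)
    with le len[OF assms(4)] len[OF assms(5)] show False by simp
  qed
  moreover have "\<not> i < j"
  proof
    assume "i < j"
    show False
      by (rule core[OF assms(1) assms(2) assms(3) assms(4) \<open>i < j\<close> M]) auto
  qed
  ultimately show "i = j" by simp
next
  assume "i = j"
  then show "derives {replicate k a @ [b] @ replicate l a @ replicate m b} (S k l m i) (S k l m j)"
    by (simp add: derives_def)
qed

end
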